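(* Let $L$ be a finite distributive lattice, let $m$ be the maximum size of an antichain in $\operatorname{Mi}(L)$, and put $Q_L(x)=\sum_{k=0}^m q_k(L)x^k$ and $D_L^-(x)=\sum_{k=0}^m d_k^-(L)x^k$. Then $Q_L(x)=D_L^-(1+x)$.
   Context: $\operatorname{Mi}(L)$ is the set of meet-irreducible elements of $L$, as a poset under the order of $L$. For a finite lattice $M$ and $k\ge0$, $q_k(M)$ is the number of convex sublattices (intervals) of $M$ isomorphic to the Boolean lattice $\mathbf{B}_k$ with $2^k$ elements. For $a\in M$, $\deg^-_M(a)$ is the number of elements of $M$ covering $a$, and $d_k^-(M)$ is the number of $a\in M$ with $\deg^-_M(a)=k$. *)

theory Defs
  imports "HOL-Computational_Algebra.Polynomial"
begin

definition Mi :: "'a::lattice set" where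
  "Mi = {a. (\<exists>b. a < b) \<and> (\<forall>b c. a = inf b c \<longrightarrow> a = b \<or> a = c)}"

definition antichain_in :: "'a::order set \<Rightarrow> bool" where
  "antichain_in A \<longleftrightarrow> (\<forall>x\<in>A. \<forall>y\<in>A. x \<le> y \<longrightarrow> x = y)"

definition width :: "'a::order set \<Rightarrow> nat" where
  "width P = Max {card A | A. A \<subseteq> P \<and> antichain_in A}"

definition convex_sublattice :: "'a::lattice set \<Rightarrow> bool" where
  "convex_sublattice S \<longleftrightarrow> S \<noteq> {}
     \<and> (\<forall>x\<in>S. \<forall>y\<in>S. inf x y \<in> S \<and> sup x y \<in> S)
     \<and> (\<forall>x\<in>S. \<forall>y\<in>S. \<forall>z. x \<le> z \<and> z \<le> y \<longrightarrow> z \<in> S)"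

definition iso_Boolean :: "'a::order set \<Rightarrow> nat \<Rightarrow> bool" where
  "iso_Boolean S k \<longleftrightarrow> (\<exists>f. bij_betw f S (Pow {0..<k}) \<and>
      (\<forall>x\<in>S. \<forall>y\<in>S. x \<le> y \<longleftrightarrow> f x \<subseteq> f y))"

definition q :: "nat \<Rightarrow> 'a::{finite,lattice} itself \<Rightarrow> nat" where
  "q k _ = card {S :: 'a set. convex_sublattice S \<and> iso_Boolean S k}"

definition covers :: "'a::order \<Rightarrow> 'a \<Rightarrow> bool" where
  "covers a b \<longleftrightarrow> a < b \<and> \<not> (\<exists>c. a < c \<and> c < b)"

definition deg_minus :: "'a::{finite,order} \<Rightarrow> nat" where
  "deg_minus a = card {b. covers a b}"

definition d_minus :: "nat \<Rightarrow> 'a::{finite,order} itself \<Rightarrow> nat" where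
  "d_minus k _ = card {a :: 'a. deg_minus a = k}"

end

theory Submission
  imports Defs
begin


definition J :: "'a::lattice \<Rightarrow> 'a set \<Rightarrow> 'a" where
  "J a C = Sup_fin (insert a C)"

lemma J_ge: "finite C \<Longrightarrow> a \<le> J a C"
  unfolding J_def by (simp add: Sup_fin.coboundedI)

lemma J_ge': "finite C \<Longrightarrow> c \<in> C \<Longrightarrow> c \<le> J a C"
  unfolding J_def by (simp add: Sup_fin.coboundedI)

lemma J_le_iff: "finite C \<Longrightarrow> J a C \<le> x \<longleftrightarrow> a \<le> x \<and> (\<forall>c\<in>C. c \<le> x)"
  unfolding J_def by (simp add: Sup_fin.bounded_iff)

lemma J_mono: "finite C \<Longrightarrow> D \<subseteq> C \<Longrightarrow> J a D \<le> J a C"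
proof -
  assume fC: "finite C" and DC: "D \<subseteq> C"
  have fD: "finite D" using fC DC by (rule finite_subset[rotated])
  show ?thesis unfolding J_le_iff[OF fD] using J_ge[OF fC] J_ge'[OF fC] DC by blast
qed

lemma covers_inf:
  fixes a :: "'a::lattice"
  assumes "covers a c" "a \<le> z"
  shows "inf z c = a \<or> inf z c = c"
proof -
  have "a < c" using assms(1) unfolding covers_def by simp
  hence "a \<le> c" by (rule less_imp_le)
  hence h1: "a \<le> inf z c" using assms(2) by simp
  have h2: "inf z c \<le> c" by simp
  have h3: "\<not> (a < inf z c \<and> inf z c < c)" using assms(1) unfolding covers_def by blast
  show ?thesis using h1 h2 h3 unfolding order_le_less by blast
qed

lemma J_restrict:
  fixes a :: "'a::distrib_lattice"
  assumes C: "finite C" "\<forall>c\<in>C. covers a c" and z: "a \<le> z" "z \<le> J a C"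
  shows "z = J a {c\<in>C. c \<le> z}"
proof -
  have "z = inf z (J a C)" using z by (simp add: inf.absorb1)
  also have "\<dots> = Sup_fin {inf z x |x. x \<in> insert a C}"
    unfolding J_def using C by (simp add: inf_Sup1_distrib)
  also have "{inf z x |x. x \<in> insert a C} = insert a {c\<in>C. c \<le> z}"
  proof -
    have "inf z a = a" using z by (simp add: inf.absorb2)
    moreover have ifc: "inf z c = (if c \<le> z then c else a)" if "c \<in> C" for c
    proof (cases "c \<le> z")
      case True thus ?thesis by (simp add: inf.absorb2)
    next
      case False
      hence "inf z c \<noteq> c" by (simp add: le_iff_inf inf_commute)
      thus ?thesis using covers_inf[of a c z] C that z False by auto
    qed
    show ?thesis
    proof
      show "{inf z x |x. x \<in> insert a C} \<subseteq> insert a {c\<in>C. c \<le> z}"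
      proof
        fix y assume "y \<in> {inf z x |x. x \<in> insert a C}"
        then obtain x where x: "y = inf z x" "x \<in> insert a C" by blast
        show "y \<in> insert a {c\<in>C. c \<le> z}"
        proof (cases "x = a")
          case True thus ?thesis using x \<open>inf z a = a\<close> by simp
        next
          case False
          hence "x \<in> C" using x by simp
          thus ?thesis using x ifc[of x] by (cases "x \<le> z") auto
        qed
      qed
    next
      show "insert a {c\<in>C. c \<le> z} \<subseteq> {inf z x |x. x \<in> insert a C}"
      proof
        fix y assume "y \<in> insert a {c\<in>C. c \<le> z}"
        hence "y = a \<or> (y \<in> C \<and> y \<le> z)" by simp
        thus "y \<in> {inf z x |x. x \<in> insert a C}"
        proof
          assume "y = a" thus ?thesis using \<open>inf z a = a\<close> by force
        next
          assume "y \<in> C \<and> y \<le> z"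
          hence "inf z y = y" "y \<in> insert a C" by (simp_all add: inf.absorb2)
          thus ?thesis by force
        qed
      qed
    qed
  qed
  finally show ?thesis unfolding J_def .
qed

lemma cover_le_J:
  fixes a :: "'a::distrib_lattice"
  assumes C: "finite C" "\<forall>c\<in>C. covers a c" and c: "covers a c" "c \<le> J a C"
  shows "c \<in> C"
proof (rule ccontr)
  assume nc: "c \<notin> C"
  have "c = inf c (J a C)" using c by (simp add: inf.absorb1)
  also have "\<dots> = Sup_fin {inf c x |x. x \<in> insert a C}"
    unfolding J_def using C by (simp add: inf_Sup1_distrib)
  also have "{inf c x |x. x \<in> insert a C} = {a}"
  proof -
    have "inf c a = a" using c unfolding covers_def by (auto intro: inf_absorb2)
    moreover have "inf c x = a" if "x \<in> C" for x
    proof -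
      have cx: "covers a x" using C that by auto
      have "x \<noteq> c" using nc that by auto
      have ac: "a \<le> c" using c(1) unfolding covers_def by (simp add: less_imp_le)
      have ax: "a < x" using cx unfolding covers_def by simp
      have "inf c x \<noteq> x"
      proof
        assume "inf c x = x"
        hence "x \<le> c" by (simp add: le_iff_inf inf_commute)
        hence "x < c" using \<open>x \<noteq> c\<close> by (simp add: order_le_less)
        thus False using ax c(1) unfolding covers_def by blast
      qed
      moreover have "inf c x = a \<or> inf c x = x" by (rule covers_inf[OF cx ac])
      ultimately show ?thesis by simp
    qed
    ultimately show ?thesis by (auto intro!: exI[of _ a])
  qed
  finally have "c = a" by simp
  thus False using c unfolding covers_def by simp
qed

definition I :: "'a::lattice \<Rightarrow> 'a set \<Rightarrow> 'a set" where
  "I a C = {z. a \<le> z \<and> z \<le> J a C}"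

lemma sub_eq:
  fixes a :: "'a::distrib_lattice"
  assumes C: "finite C" "\<forall>c\<in>C. covers a c" and D: "D \<subseteq> C"
  shows "{c\<in>C. c \<le> J a D} = D"
proof -
  have fD: "finite D" using C D finite_subset by auto
  have cD: "\<forall>c\<in>D. covers a c" using C D by auto
  show ?thesis using D cover_le_J[OF fD cD] J_ge'[OF fD] C by auto
qed

lemma I_props:
  fixes a :: "'a::distrib_lattice"
  assumes C: "finite C" "\<forall>c\<in>C. covers a c"
  shows "convex_sublattice (I a C) \<and> iso_Boolean (I a C) (card C)"
proof
  show "convex_sublattice (I a C)"
    unfolding convex_sublattice_def
  proof (intro conjI ballI allI impI)
    have "a \<le> J a C" by (rule J_ge[OF C(1)])
    thus "I a C \<noteq> {}" unfolding I_def by auto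
  next
    fix x y assume "x \<in> I a C" "y \<in> I a C"
    hence xy: "a \<le> x" "x \<le> J a C" "a \<le> y" "y \<le> J a C" unfolding I_def by auto
    have "a \<le> inf x y" using xy by simp
    moreover have "inf x y \<le> J a C" using xy(2) by (rule le_infI1)
    ultimately show "inf x y \<in> I a C" unfolding I_def by simp
    have "a \<le> sup x y" using xy(1) by (rule le_supI1)
    moreover have "sup x y \<le> J a C" using xy by simp
    ultimately show "sup x y \<in> I a C" unfolding I_def by simp
  next
    fix x y z assume "x \<in> I a C" "y \<in> I a C" "x \<le> z \<and> z \<le> y"
    hence "a \<le> x" "x \<le> z" "z \<le> y" "y \<le> J a C" unfolding I_def by auto
    hence "a \<le> z" "z \<le> J a C" by (blast intro: order.trans)+
    thus "z \<in> I a C" unfolding I_def by simp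
  qed
next
  obtain g where g: "bij_betw g C {0..<card C}" using ex_bij_betw_finite_nat[OF C(1)] by blast
  define f where "f z = g ` {c\<in>C. c \<le> z}" for z
  have ginj: "inj_on g C" and gim: "g ` C = {0..<card C}" using g by (auto simp: bij_betw_def)
  have key: "z = J a {c\<in>C. c \<le> z}" if "z \<in> I a C" for z
    by (rule J_restrict[OF C]) (use that in \<open>auto simp: I_def\<close>)
  have ord: "x \<le> y \<longleftrightarrow> f x \<subseteq> f y" if "x \<in> I a C" "y \<in> I a C" for x y
  proof
    assume "x \<le> y" thus "f x \<subseteq> f y" unfolding f_def by auto
  next
    assume "f x \<subseteq> f y"
    have "{c\<in>C. c \<le> x} \<subseteq> {c\<in>C. c \<le> y}"
    proof
      fix c assume c: "c \<in> {c\<in>C. c \<le> x}"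
      hence "g c \<in> f y" using \<open>f x \<subseteq> f y\<close> unfolding f_def by auto
      then obtain c' where "c' \<in> C" "c' \<le> y" "g c = g c'" unfolding f_def by auto
      thus "c \<in> {c\<in>C. c \<le> y}" using c ginj unfolding inj_on_def by auto
    qed
    hence "J a {c\<in>C. c \<le> x} \<le> J a {c\<in>C. c \<le> y}" using J_mono[of "{c\<in>C. c \<le> y}" "{c\<in>C. c \<le> x}" a] C(1) by auto
    have "x = J a {c\<in>C. c \<le> x}" by (rule key[OF that(1)])
    also note \<open>J a {c\<in>C. c \<le> x} \<le> J a {c\<in>C. c \<le> y}\<close>
    also have "J a {c\<in>C. c \<le> y} = y" by (rule key[OF that(2), symmetric])
    finally show "x \<le> y" .
  qed
  have "bij_betw f (I a C) (Pow {0..<card C})"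
  proof (rule bij_betw_imageI)
    show "inj_on f (I a C)"
    proof (rule inj_onI)
      fix x y assume xy: "x \<in> I a C" "y \<in> I a C" "f x = f y"
      have "x \<le> y" using ord[OF xy(1) xy(2)] xy(3) by simp
      moreover have "y \<le> x" using ord[OF xy(2) xy(1)] xy(3) by simp
      ultimately show "x = y" by (rule order.antisym)
    qed
    show "f ` I a C = Pow {0..<card C}"
    proof
      show "f ` I a C \<subseteq> Pow {0..<card C}" unfolding f_def using gim by auto
    next
      show "Pow {0..<card C} \<subseteq> f ` I a C"
      proof
        fix D' assume "D' \<in> Pow {0..<card C}"
        hence D': "D' \<subseteq> g ` C" using gim by auto
        define D where "D = {c\<in>C. g c \<in> D'}"
        have gD: "g ` D = D'" using D' unfolding D_def by auto
        have DC: "D \<subseteq> C" unfolding D_def by auto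
        have fD: "finite D" using DC C(1) finite_subset by auto
        have "J a D \<in> I a C" unfolding I_def using J_ge[OF fD] J_mono[OF C(1) DC] by auto
        moreover have "f (J a D) = D'" unfolding f_def sub_eq[OF C DC] gD ..
        ultimately show "D' \<in> f ` I a C" by force
      qed
    qed
  qed
  thus "iso_Boolean (I a C) (card C)" unfolding iso_Boolean_def using ord by blast
qed

lemma I_inj:
  fixes a :: "'a::distrib_lattice"
  assumes C: "finite C" "\<forall>c\<in>C. covers a c" and C': "finite C'" "\<forall>c\<in>C'. covers a' c"
    and eq: "I a C = I a' C'"
  shows "a = a' \<and> C = C'"
proof -
  have "a \<in> I a C" "a' \<in> I a' C'" unfolding I_def using J_ge C C' by auto
  hence aa: "a = a'" using eq unfolding I_def by (auto intro: order.antisym)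
  have "J a C \<in> I a C" "J a C' \<in> I a C'" unfolding I_def using J_ge C C' by auto
  hence JJ: "J a C = J a C'" using eq aa unfolding I_def by (auto intro: order.antisym)
  have "C = {c. covers a c \<and> c \<le> J a C}" using cover_le_J[OF C] J_ge'[OF C(1)] C by auto
  moreover have "C' = {c. covers a c \<and> c \<le> J a C'}" using cover_le_J[OF C'] J_ge'[OF C'(1)] C' aa by auto
  ultimately show ?thesis using aa JJ by simp
qed


lemma bool_is_I:
  fixes S :: "'a::{finite,distrib_lattice} set"
  assumes cs: "convex_sublattice S" and ib: "iso_Boolean S k"
  shows "\<exists>a C. (\<forall>c\<in>C. covers a c) \<and> card C = k \<and> S = I a C"
proof -
  obtain f where bij: "bij_betw f S (Pow {0..<k})" and ord: "\<forall>x\<in>S. \<forall>y\<in>S. x \<le> y \<longleftrightarrow> f x \<subseteq> f y"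
    using ib unfolding iso_Boolean_def by blast
  define h where "h = the_inv_into S f"
  have hS: "h D \<in> S" if "D \<subseteq> {0..<k}" for D
    using bij_betw_the_inv_into[OF bij] that unfolding h_def bij_betw_def by auto
  have fh: "f (h D) = D" if "D \<subseteq> {0..<k}" for D
    using f_the_inv_into_f_bij_betw[OF bij] that unfolding h_def by auto
  have hf: "h (f x) = x" if "x \<in> S" for x
    using the_inv_into_f_f[of f S x] bij that unfolding h_def bij_betw_def by auto
  have fS: "f x \<subseteq> {0..<k}" if "x \<in> S" for x using bij that unfolding bij_betw_def by auto
  define a where "a = h {}"
  define t where "t = h {0..<k}"
  have aS: "a \<in> S" and tS: "t \<in> S" unfolding a_def t_def using hS by auto
  have fa: "f a = {}" and ft: "f t = {0..<k}" unfolding a_def t_def using fh by auto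
  have a_le: "a \<le> x" if "x \<in> S" for x using ord aS that fa by auto
  have le_t: "x \<le> t" if "x \<in> S" for x using ord tS that ft fS by auto
  have Seq: "S = {z. a \<le> z \<and> z \<le> t}"
  proof
    show "S \<subseteq> {z. a \<le> z \<and> z \<le> t}" using a_le le_t by auto
    have conv: "\<forall>x\<in>S. \<forall>y\<in>S. \<forall>z. x \<le> z \<and> z \<le> y \<longrightarrow> z \<in> S"
      using cs unfolding convex_sublattice_def by (elim conjE)
    show "{z. a \<le> z \<and> z \<le> t} \<subseteq> S"
    proof
      fix z assume "z \<in> {z. a \<le> z \<and> z \<le> t}"
      hence "a \<le> z \<and> z \<le> t" by simp
      thus "z \<in> S" using conv aS tS by blast
    qed
  qed
  define C where "C = {c. covers a c \<and> c \<le> t}"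
  have covC: "\<forall>c\<in>C. covers a c" unfolding C_def by auto
  have CS: "C \<subseteq> S" unfolding C_def Seq covers_def by auto
  have fC: "f ` C = (\<lambda>i. {i}) ` {0..<k}"
  proof
    show "f ` C \<subseteq> (\<lambda>i. {i}) ` {0..<k}"
    proof
      fix D assume "D \<in> f ` C"
      then obtain c where c: "c \<in> C" "D = f c" by auto
      have cS: "c \<in> S" using c CS by auto
      have "f c \<noteq> {}" using c hf[OF cS] unfolding a_def C_def covers_def by auto
      then obtain i where i: "i \<in> f c" by auto
      have ik: "{i} \<subseteq> {0..<k}" using i fS[OF cS] by auto
      define e where "e = h {i}"
      have eS: "e \<in> S" and fe: "f e = {i}" unfolding e_def using hS fh ik by auto
      have "e \<le> c" using ord eS cS fe i by auto
      moreover have "e \<noteq> a" using fe fa by auto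
      moreover have "a \<le> e" using a_le eS by auto
      ultimately have "a < e" "e \<le> c" by (auto simp: order_le_less)
      moreover have "\<not> e < c" using c \<open>a < e\<close> unfolding C_def covers_def by auto
      ultimately have "e = c" by (auto simp: order_le_less)
      thus "D \<in> (\<lambda>i. {i}) ` {0..<k}" using c fe ik by auto
    qed
  next
    show "(\<lambda>i. {i}) ` {0..<k} \<subseteq> f ` C"
    proof
      fix D assume "D \<in> (\<lambda>i. {i}) ` {0..<k}"
      then obtain i where i: "i < k" "D = {i}" by auto
      define e where "e = h {i}"
      have eS: "e \<in> S" and fe: "f e = {i}" unfolding e_def using hS fh i by auto
      have ae: "a < e" using a_le[OF eS] fe fa by (auto simp: order_le_less)
      have "\<not> (a < y \<and> y < e)" for y
      proof
        assume y: "a < y \<and> y < e"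
        hence yS: "y \<in> S" using Seq le_t[OF eS] by auto
        have "y \<le> e" using y by (simp add: less_imp_le)
        hence "f y \<subseteq> {i}" using ord yS eS fe by auto
        moreover have "f y \<noteq> {i}"
        proof
          assume "f y = {i}"
          hence "y = e" using hf[OF yS] unfolding e_def by auto
          thus False using y by simp
        qed
        ultimately have "f y = {}" by auto
        hence "y = a" using hf[OF yS] unfolding a_def by auto
        thus False using y by auto
      qed
      hence "e \<in> C" unfolding C_def covers_def using ae le_t[OF eS] by auto
      thus "D \<in> f ` C" using fe i by auto
    qed
  qed
  have injS: "inj_on f S" using bij unfolding bij_betw_def by simp
  have injC: "inj_on f C" using injS CS by (rule inj_on_subset)
  have cardC: "card C = k"
  proof -
    have "card C = card (f ` C)" using card_image[OF injC] by simp
    also have "\<dots> = card {0..<k}" unfolding fC by (rule card_image) (auto simp: inj_on_def)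
    finally show ?thesis by simp
  qed
  have finC: "finite C" by simp
  have J1: "a \<le> J a C" by (rule J_ge[OF finC])
  have "a \<le> t" by (rule le_t[OF aS])
  moreover have "\<forall>c\<in>C. c \<le> t" unfolding C_def by auto
  ultimately have J2: "J a C \<le> t" unfolding J_le_iff[OF finC] by blast
  have JS: "J a C \<in> S" using J1 J2 by (subst Seq) simp
  have "f t \<subseteq> f (J a C)"
  proof
    fix i assume "i \<in> f t"
    hence "{i} \<in> f ` C" using ft fC by auto
    then obtain c where c: "c \<in> C" "f c = {i}" by auto
    have "c \<le> J a C" using J_ge'[OF finC c(1)] .
    hence "f c \<subseteq> f (J a C)" using ord CS c JS by auto
    thus "i \<in> f (J a C)" using c by auto
  qed
  hence "t \<le> J a C" using ord tS JS by auto
  hence "t = J a C" using le_t[OF JS] by auto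
  hence "S = I a C" unfolding Seq I_def by simp
  thus ?thesis using covC cardC by blast
qed

lemma deg_le_width:
  fixes a :: "'a::{finite,distrib_lattice}"
  shows "deg_minus a \<le> width (Mi :: 'a set)"
proof -
  define B where "B = {b. covers a b}"
  define U where "U b = {x. a \<le> x \<and> (\<forall>c\<in>B. c \<noteq> b \<longrightarrow> c \<le> x) \<and> \<not> b \<le> x}" for b
  have Une: "U b \<noteq> {}" if "b \<in> B" for b
  proof -
    have f: "finite (B - {b})" by simp
    have cov: "\<forall>c\<in>B - {b}. covers a c" unfolding B_def by auto
    have bcov: "covers a b" using that unfolding B_def by auto
    have "\<not> b \<le> J a (B - {b})"
    proof
      assume "b \<le> J a (B - {b})"
      hence "b \<in> B - {b}" by (rule cover_le_J[OF f cov bcov])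
      thus False by simp
    qed
    hence "J a (B - {b}) \<in> U b" unfolding U_def using J_ge[OF f] J_ge'[OF f] by auto
    thus ?thesis by auto
  qed
  define mx where "mx b = (SOME x. x \<in> U b \<and> (\<forall>y\<in>U b. x \<le> y \<longrightarrow> x = y))" for b
  have mx: "mx b \<in> U b \<and> (\<forall>y\<in>U b. mx b \<le> y \<longrightarrow> mx b = y)" if "b \<in> B" for b
  proof -
    have fU: "finite (U b)" by simp
    have "\<exists>x\<in>U b. \<forall>y\<in>U b. x \<le> y \<longrightarrow> x = y" by (rule finite_has_maximal[OF fU Une[OF that]])
    hence "\<exists>x. x \<in> U b \<and> (\<forall>y\<in>U b. x \<le> y \<longrightarrow> x = y)" by blast
    thus ?thesis unfolding mx_def by (rule someI_ex)
  qed
  have mxU: "a \<le> mx b" "\<And>c. c \<in> B \<Longrightarrow> c \<noteq> b \<Longrightarrow> c \<le> mx b" "\<not> b \<le> mx b" if "b \<in> B" for b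
    using mx[OF that] unfolding U_def by auto
  have mxMi: "mx b \<in> Mi" if b: "b \<in> B" for b
    unfolding Mi_def
  proof (intro CollectI conjI allI impI)
    have "mx b < sup (mx b) b" using mxU(3)[OF b] by (simp add: less_le_not_le)
    thus "\<exists>y. mx b < y" by blast
  next
    fix y z assume eq: "mx b = inf y z"
    show "mx b = y \<or> mx b = z"
    proof (rule ccontr)
      assume ne: "\<not> (mx b = y \<or> mx b = z)"
      have yz: "mx b \<le> y" "mx b \<le> z" using eq by auto
      have up: "a \<le> w \<and> (\<forall>c\<in>B. c \<noteq> b \<longrightarrow> c \<le> w)" if "mx b \<le> w" for w
      proof
        show "a \<le> w" using mxU(1)[OF b] that by (rule order.trans)
        show "\<forall>c\<in>B. c \<noteq> b \<longrightarrow> c \<le> w"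
        proof (intro ballI impI)
          fix c assume "c \<in> B" "c \<noteq> b"
          hence "c \<le> mx b" using mxU(2)[OF b] by blast
          thus "c \<le> w" using that by (rule order.trans)
        qed
      qed
      have "mx b \<noteq> y" "mx b \<noteq> z" using ne by auto
      hence "y \<notin> U b" "z \<notin> U b" using mx[OF b] yz by blast+
      hence "b \<le> y" "b \<le> z" using up[OF yz(1)] up[OF yz(2)] unfolding U_def by auto
      hence "b \<le> mx b" using eq by simp
      thus False using mxU(3)[OF b] by simp
    qed
  qed
  have le_imp: "b = b'" if "b \<in> B" "b' \<in> B" "mx b \<le> mx b'" for b b'
  proof (rule ccontr)
    assume "b \<noteq> b'"
    hence "b' \<le> mx b" using mxU(2)[OF that(1) that(2)] by auto
    hence "b' \<le> mx b'" using that(3) by (rule order.trans)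
    thus False using mxU(3)[OF that(2)] by simp
  qed
  have inj: "inj_on mx B" by (rule inj_onI) (use le_imp in force)
  have anti: "antichain_in (mx ` B)" unfolding antichain_in_def using le_imp by auto
  have sub: "mx ` B \<subseteq> Mi" using mxMi by auto
  have fin: "finite {card A | A. A \<subseteq> (Mi :: 'a set) \<and> antichain_in A}"
  proof -
    have "{card A | A. A \<subseteq> (Mi :: 'a set) \<and> antichain_in A} \<subseteq> card ` (UNIV :: 'a set set)" by auto
    thus ?thesis by (rule finite_subset) simp
  qed
  have "card (mx ` B) \<in> {card A | A. A \<subseteq> (Mi :: 'a set) \<and> antichain_in A}" using anti sub by blast
  hence "card (mx ` B) \<le> width (Mi :: 'a set)" unfolding width_def using fin by (rule Max_ge[rotated])
  thus ?thesis unfolding deg_minus_def B_def[symmetric] using card_image[OF inj] by simp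
qed



lemma smult_int_nat: "smult (int c) p = of_nat c * (p :: int poly)"
  by (induct c) (simp_all add: smult_add_left algebra_simps)

lemma pcompose_pow: "pcompose (p ^ k) r = (pcompose p r) ^ k"
  by (induct k) (simp_all add: pcompose_mult pcompose_1)

lemma pcompose_monom: "pcompose (monom c k) r = smult c (r ^ k)"
  by (simp add: monom_altdef pcompose_smult pcompose_pow pcompose_pCons)

lemma binom_poly: "[:1,1:] ^ n = (\<Sum>k\<le>n. monom (int (n choose k)) k)"
proof -
  have "[:1,1:] = [:0,1:] + (1 :: int poly)" by (simp add: one_pCons)
  hence "[:1,1:] ^ n = (\<Sum>k\<le>n. of_nat (n choose k) * [:0,1:] ^ k * (1::int poly) ^ (n - k))"
    using binomial_ring[of "[:0,1:]" "1::int poly" n] by simp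
  also have "\<dots> = (\<Sum>k\<le>n. monom (int (n choose k)) k)"
    by (rule sum.cong) (simp_all add: monom_altdef smult_int_nat)
  finally show ?thesis .
qed

lemma binom_poly_ext: assumes "n \<le> m"
  shows "[:1,1:] ^ n = (\<Sum>k\<le>m. monom (int (n choose k)) k)"
proof -
  have "(\<Sum>k\<le>m. monom (int (n choose k)) k) = (\<Sum>k\<le>n. monom (int (n choose k)) k)"
    by (rule sum.mono_neutral_right) (use assms in auto)
  thus ?thesis using binom_poly by simp
qed


lemma q_eq:
  fixes L :: "'a::{finite,distrib_lattice} itself"
  shows "q k L = (\<Sum>a\<in>UNIV. deg_minus (a::'a) choose k)"
proof -
  define Sg where "Sg = Sigma (UNIV::'a set) (\<lambda>a. {C. C \<subseteq> {b. covers a b} \<and> card C = k})"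
  have img: "{S::'a set. convex_sublattice S \<and> iso_Boolean S k} = (\<lambda>(a,C). I a C) ` Sg"
  proof
    show "{S::'a set. convex_sublattice S \<and> iso_Boolean S k} \<subseteq> (\<lambda>(a,C). I a C) ` Sg"
    proof
      fix S :: "'a set" assume "S \<in> {S. convex_sublattice S \<and> iso_Boolean S k}"
      then obtain a C where aC: "\<forall>c\<in>C. covers a c" "card C = k" "S = I a C"
        using bool_is_I by blast
      have "(a, C) \<in> Sg" unfolding Sg_def using aC by auto
      thus "S \<in> (\<lambda>(a,C). I a C) ` Sg" using aC(3) by (auto intro: image_eqI[of _ _ "(a,C)"])
    qed
  next
    show "(\<lambda>(a,C). I a C) ` Sg \<subseteq> {S::'a set. convex_sublattice S \<and> iso_Boolean S k}"
    proof
      fix S assume "S \<in> (\<lambda>(a,C). I a C) ` Sg"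
      then obtain a C where aC: "(a, C) \<in> Sg" "S = I a C" by auto
      have "finite C" "\<forall>c\<in>C. covers a c" "card C = k" using aC(1) unfolding Sg_def by auto
      thus "S \<in> {S::'a set. convex_sublattice S \<and> iso_Boolean S k}" using I_props[of C a] aC(2) by simp
    qed
  qed
  have inj: "inj_on (\<lambda>(a,C). I a C) Sg"
  proof (rule inj_onI)
    fix x y assume xy: "x \<in> Sg" "y \<in> Sg" "(\<lambda>(a,C). I a C) x = (\<lambda>(a,C). I a C) y"
    obtain a C where x: "x = (a, C)" by (cases x)
    obtain a' C' where y: "y = (a', C')" by (cases y)
    have "finite C" "\<forall>c\<in>C. covers a c" "finite C'" "\<forall>c\<in>C'. covers a' c" "I a C = I a' C'"
      using xy unfolding x y Sg_def by auto
    hence "a = a' \<and> C = C'" by (rule I_inj)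
    thus "x = y" using x y by simp
  qed
  have "q k L = card Sg" unfolding q_def img using card_image[OF inj] by simp
  also have "\<dots> = (\<Sum>a\<in>UNIV. card {C. C \<subseteq> {b. covers (a::'a) b} \<and> card C = k})"
    unfolding Sg_def by (subst card_SigmaI) auto
  also have "\<dots> = (\<Sum>a\<in>UNIV. deg_minus (a::'a) choose k)"
    unfolding deg_minus_def by (rule sum.cong[OF refl]) (rule n_subsets, simp)
  finally show ?thesis .
qed

theorem corollary8:
  fixes L :: "'a::{finite, distrib_lattice} itself"
  defines "m \<equiv> width (Mi :: 'a set)"
  shows "(\<Sum>k\<le>m. monom (int (q k L)) k)
         = pcompose (\<Sum>k\<le>m. monom (int (d_minus k L)) k) [:1, 1:]"
proof -
  let ?p = "[:1,1:] :: int poly"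
  have dm: "deg_minus (a::'a) \<le> m" for a unfolding m_def by (rule deg_le_width)
  have "(\<Sum>k\<le>m. monom (int (q k L)) k) = (\<Sum>k\<le>m. \<Sum>a\<in>UNIV. monom (int (deg_minus (a::'a) choose k)) k)"
    unfolding q_eq of_nat_sum monom_sum ..
  also have "\<dots> = (\<Sum>a\<in>UNIV. \<Sum>k\<le>m. monom (int (deg_minus (a::'a) choose k)) k)"
    by (rule sum.swap)
  also have "\<dots> = (\<Sum>a\<in>UNIV. ?p ^ deg_minus (a::'a))"
    by (rule sum.cong[OF refl]) (rule binom_poly_ext[OF dm, symmetric])
  also have "\<dots> = (\<Sum>k\<le>m. \<Sum>a\<in>{a::'a. deg_minus a = k}. ?p ^ deg_minus a)"
  proof -
    have G: "(\<Sum>k\<le>m. \<Sum>a\<in>{x. x \<in> (UNIV::'a set) \<and> deg_minus x = k}. ?p ^ deg_minus a)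
       = (\<Sum>a\<in>UNIV. ?p ^ deg_minus (a::'a))" by (rule sum.group) (use dm in auto)
    thus ?thesis by simp
  qed
  also have "\<dots> = (\<Sum>k\<le>m. smult (int (d_minus k L)) (?p ^ k))"
  proof (rule sum.cong[OF refl])
    fix k
    have "(\<Sum>a\<in>{a::'a. deg_minus a = k}. ?p ^ deg_minus a) = (\<Sum>a\<in>{a::'a. deg_minus a = k}. ?p ^ k)"
      by (rule sum.cong) auto
    also have "\<dots> = of_nat (d_minus k L) * ?p ^ k" unfolding d_minus_def sum_constant ..
    finally show "(\<Sum>a\<in>{a::'a. deg_minus a = k}. ?p ^ deg_minus a) = smult (int (d_minus k L)) (?p ^ k)"
      unfolding smult_int_nat .
  qed
  also have "\<dots> = pcompose (\<Sum>k\<le>m. monom (int (d_minus k L)) k) ?p"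
    unfolding pcompose_sum pcompose_monom ..
  finally show ?thesis .
qed

end
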